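(* Let $a,b,c,x,y,u_1,\dots,u_m$ be independent variables, $g=abx^2+(ay-bc)^2$, and $f\in\mathbb C[a,b,c,u_1,\dots,u_m,x,y]_{abcg}$ (localization at $abcg$). Suppose that for every choice of values $(a^0,b^0,c^0,u^0_1,\dots,u^0_m)$ in some nonempty open subset of $\mathbb C^{m+3}$ and every $\sigma\in\mathbb C$ there is $\tau\in\mathbb C$ such that the level set $\{(x,y)\in\mathbb C^2: g|_{a=a^0,b=b^0,c=c^0,u_i=u_i^0}(x,y)=\sigma\}$ is contained in $\{(x,y)\in\mathbb C^2: f|_{a=a^0,b=b^0,c=c^0,u_i=u_i^0}(x,y)=\tau\}$. Then $f=F(g)$ for some Laurent polynomial $F$ with coefficients in $\mathbb C[a,b,c,u_1,\dots,u_m]_{abc}$. *)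

theory Defs
  imports Complex_Main
begin

text \<open>Points of the affine space C^n are represented as complex lists of length n.
  Polynomial functions in n variables: generated by constants and coordinate
  projections under + and *. (Over the infinite field C these are exactly the
  polynomials of C[X_0,...,X_(n-1)].)\<close>

inductive_set poly_fun :: "nat \<Rightarrow> (complex list \<Rightarrow> complex) set" for n :: nat where
  pf_const: "(\<lambda>v. c) \<in> poly_fun n"
| pf_var: "i < n \<Longrightarrow> (\<lambda>v. v ! i) \<in> poly_fun n"
| pf_add: "p \<in> poly_fun n \<Longrightarrow> q \<in> poly_fun n \<Longrightarrow> (\<lambda>v. p v + q v) \<in> poly_fun n"
| pf_mult: "p \<in> poly_fun n \<Longrightarrow> q \<in> poly_fun n \<Longrightarrow> (\<lambda>v. p v * q v) \<in> poly_fun n"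

definition open_Cn :: "nat \<Rightarrow> complex list set \<Rightarrow> bool" where
  "open_Cn n U \<longleftrightarrow> U \<subseteq> {p. length p = n} \<and>
     (\<forall>p\<in>U. \<exists>e>0. \<forall>q. length q = n \<and> (\<forall>i<n. norm (q ! i - p ! i) < e) \<longrightarrow> q \<in> U)"

text \<open>Variable order in C^(m+5): a = v!0, b = v!1, c = v!2, u_i = v!(2+i) (1 \<le> i \<le> m),
  x = v!(m+3), y = v!(m+4).  g = a b x^2 + (a y - b c)^2.\<close>
definition gfun :: "nat \<Rightarrow> complex list \<Rightarrow> complex" where
  "gfun m v = v!0 * v!1 * (v!(m+3))^2 + (v!0 * v!(m+4) - v!1 * v!2)^2"

text \<open>The element P/(abcg)^k of the localization C[a,b,c,u,x,y]_{abcg},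
  as a function on the locus abcg \<noteq> 0.\<close>
definition loc_fun :: "nat \<Rightarrow> (complex list \<Rightarrow> complex) \<Rightarrow> nat \<Rightarrow> complex list \<Rightarrow> complex" where
  "loc_fun m P k v = P v / (v!0 * v!1 * v!2 * gfun m v) ^ k"

end

theory Submission imports Defs "HOL-Computational_Algebra.Polynomial" begin

lemma pf_mono: "p \<in> poly_fun n \<Longrightarrow> n \<le> n' \<Longrightarrow> p \<in> poly_fun n'"
  by (induction rule: poly_fun.induct) (auto intro: poly_fun.intros)

lemma pf_take: "p \<in> poly_fun n \<Longrightarrow> p (take n v) = p v"
  by (induction rule: poly_fun.induct) auto

lemma pf_local: "p \<in> poly_fun n \<Longrightarrow> (\<forall>i<n. v ! i = w ! i) \<Longrightarrow> p v = p w"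
  by (induction rule: poly_fun.induct) auto

lemma pf_pow: "p \<in> poly_fun n \<Longrightarrow> (\<lambda>v. p v ^ k) \<in> poly_fun n"
proof (induction k)
  case 0 then show ?case using poly_fun.pf_const[of 1 n] by simp
next
  case (Suc k) then show ?case using poly_fun.pf_mult[OF Suc.prems Suc.IH] by simp
qed


lemma pf_sum: "(\<forall>i\<in>A. f i \<in> poly_fun n) \<Longrightarrow> (\<lambda>v. \<Sum>i\<in>A. f i v) \<in> poly_fun n"
proof (induction A rule: infinite_finite_induct)
  case (infinite A) then show ?case using poly_fun.pf_const[of 0 n] by simp
next
  case empty then show ?case using poly_fun.pf_const[of 0 n] by simp
next
  case (insert x F)
  then show ?case using poly_fun.pf_add[of "f x" n "\<lambda>v. \<Sum>i\<in>F. f i v"] by simp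
qed

lemma R_sum:
  assumes add: "\<forall>f\<in>R. \<forall>g\<in>R. (\<lambda>p. f p + g p) \<in> R" and c: "\<forall>c. (\<lambda>p. c) \<in> R"
  shows "(\<forall>i\<in>A. f i \<in> R) \<Longrightarrow> (\<lambda>p. \<Sum>i\<in>A. f i p) \<in> R"
proof (induction A rule: infinite_finite_induct)
  case (infinite A) then show ?case using c by simp
next
  case empty then show ?case using c by simp
next
  case (insert x F)
  then show ?case using add by simp
qed

lemma subst_poly:
  fixes R :: "('a \<Rightarrow> complex) set" and \<sigma> :: "nat \<Rightarrow> 'a \<Rightarrow> complex poly"
  assumes D: "D \<in> poly_fun n"
    and c: "\<forall>c. (\<lambda>p. c) \<in> R"
    and add: "\<forall>f\<in>R. \<forall>g\<in>R. (\<lambda>p. f p + g p) \<in> R"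
    and mul: "\<forall>f\<in>R. \<forall>g\<in>R. (\<lambda>p. f p * g p) \<in> R"
    and sc: "\<forall>i<n. \<forall>j. (\<lambda>p. coeff (\<sigma> i p) j) \<in> R"
    and sd: "\<forall>i<n. \<forall>p. degree (\<sigma> i p) \<le> B"
  shows "\<exists>r B'. (\<forall>p t. D (map (\<lambda>i. poly (\<sigma> i p) t) [0..<n]) = poly (r p) t)
           \<and> (\<forall>j. (\<lambda>p. coeff (r p) j) \<in> R) \<and> (\<forall>p. degree (r p) \<le> B')"
  using D
proof (induction rule: poly_fun.induct)
  case (pf_const c')
  show ?case
  proof (intro exI conjI allI)
    fix j show "(\<lambda>p. coeff ((\<lambda>p. [:c':]) p) j) \<in> R" using c by (cases j) auto
  qed auto
next
  case (pf_var i)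
  show ?case
    by (rule exI[of _ "\<sigma> i"], rule exI[of _ B]) (use pf_var sc sd in auto)
next
  case (pf_add p q)
  then obtain r1 B1 r2 B2 where r1: "(\<forall>p' t. p (map (\<lambda>i. poly (\<sigma> i p') t) [0..<n]) = poly (r1 p') t)
           \<and> (\<forall>j. (\<lambda>p. coeff (r1 p) j) \<in> R) \<and> (\<forall>p. degree (r1 p) \<le> B1)"
    and r2: "(\<forall>p' t. q (map (\<lambda>i. poly (\<sigma> i p') t) [0..<n]) = poly (r2 p') t)
           \<and> (\<forall>j. (\<lambda>p. coeff (r2 p) j) \<in> R) \<and> (\<forall>p. degree (r2 p) \<le> B2)" by blast
  show ?case
  proof (rule exI[of _ "\<lambda>p. r1 p + r2 p"], rule exI[of _ "max B1 B2"], intro conjI allI)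
    fix j show "(\<lambda>p. coeff (r1 p + r2 p) j) \<in> R" using r1 r2 add by simp
  next
    fix p' show "degree (r1 p' + r2 p') \<le> max B1 B2"
      using r1 r2 degree_add_le by (meson max.coboundedI1 max.coboundedI2)
  qed (use r1 r2 in auto)
next
  case (pf_mult p q)
  then obtain r1 B1 r2 B2 where r1: "(\<forall>p' t. p (map (\<lambda>i. poly (\<sigma> i p') t) [0..<n]) = poly (r1 p') t)
           \<and> (\<forall>j. (\<lambda>p. coeff (r1 p) j) \<in> R) \<and> (\<forall>p. degree (r1 p) \<le> B1)"
    and r2: "(\<forall>p' t. q (map (\<lambda>i. poly (\<sigma> i p') t) [0..<n]) = poly (r2 p') t)
           \<and> (\<forall>j. (\<lambda>p. coeff (r2 p) j) \<in> R) \<and> (\<forall>p. degree (r2 p) \<le> B2)" by blast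
  show ?case
  proof (rule exI[of _ "\<lambda>p. r1 p * r2 p"], rule exI[of _ "B1 + B2"], intro conjI allI)
    fix j show "(\<lambda>p. coeff (r1 p * r2 p) j) \<in> R"
      unfolding coeff_mult
      by (rule R_sum[OF add c]) (use r1 r2 mul in auto)
  next
    fix p' show "degree (r1 p' * r2 p') \<le> B1 + B2"
      using r1 r2 degree_mult_le by (meson add_mono order_trans)
  qed (use r1 r2 in auto)
qed

lemma pf_zero:
  assumes D: "D \<in> poly_fun n" and W: "W \<noteq> {}" "open_Cn n W" and Z: "\<forall>v\<in>W. D v = 0"
    and q: "length q = n"
  shows "D q = 0"
proof -
  obtain p0 where p0: "p0 \<in> W" using W by blast
  with W have lp0: "length p0 = n" unfolding open_Cn_def by blast
  obtain e where e: "e > 0" and eb: "\<forall>q'. length q' = n \<and> (\<forall>i<n. norm (q' ! i - p0 ! i) < e) \<longrightarrow> q' \<in> W"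
    using W p0 unfolding open_Cn_def by blast
  define \<sigma> where "\<sigma> = (\<lambda>i (u::unit). [:p0!i, q!i - p0!i:])"
  obtain r B' where r: "\<forall>p t. D (map (\<lambda>i. poly (\<sigma> i p) t) [0..<n]) = poly (r p) t"
  proof -
    have "\<forall>i<n. \<forall>p. degree (\<sigma> i p) \<le> 1" unfolding \<sigma>_def by simp
    from subst_poly[OF D, of UNIV \<sigma>, OF _ _ _ _ this] show ?thesis using that by auto
  qed
  define line where "line t = map (\<lambda>i. poly (\<sigma> i ()) t) [0..<n]" for t
  have linei: "line t ! i = p0!i + t * (q!i - p0!i)" if "i < n" for t i
    using that unfolding line_def \<sigma>_def by simp
  define M where "M = (\<Sum>i<n. norm (q!i - p0!i)) + 1"
  have Mb: "norm (q!i - p0!i) \<le> M - 1" if "i < n" for i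
    unfolding M_def using that by (auto intro: member_le_sum)
  have M0: "M > 0" unfolding M_def by (simp add: add_nonneg_pos sum_nonneg)
  define \<delta> where "\<delta> = e / M"
  have \<delta>0: "\<delta> > 0" unfolding \<delta>_def using e M0 by simp
  have zero: "poly (r ()) t = 0" if "norm t < \<delta>" for t
  proof -
    have "line t \<in> W"
    proof (rule eb[rule_format], intro conjI allI impI)
      show "length (line t) = n" unfolding line_def by simp
      fix i assume i: "i < n"
      have "norm (line t ! i - p0 ! i) = norm t * norm (q!i - p0!i)" using linei[OF i] by (simp add: norm_mult)
      also have "\<dots> \<le> norm t * M" using Mb[OF i] by (simp add: mult_left_mono)
      also have "\<dots> < \<delta> * M" using that M0 by simp
      also have "\<dots> = e" unfolding \<delta>_def using M0 by simp
      finally show "norm (line t ! i - p0 ! i) < e" .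
    qed
    then have "D (line t) = 0" using Z by blast
    moreover have "D (line t) = poly (r ()) t" unfolding line_def by (rule r[rule_format])
    ultimately show ?thesis by simp
  qed
  have "r () = 0"
  proof (rule ccontr)
    assume "r () \<noteq> 0"
    then have fin: "finite {x. poly (r ()) x = 0}" by (rule poly_roots_finite)
    define tk where "tk k = complex_of_real (\<delta> / (real k + 2))" for k
    have "inj tk" unfolding tk_def inj_def using \<delta>0 by (auto simp: field_simps)
    moreover have "range tk \<subseteq> {x. poly (r ()) x = 0}"
    proof
      fix x assume "x \<in> range tk" then obtain k where x: "x = tk k" by blast
      have "norm x = \<delta> / (real k + 2)" unfolding x tk_def using \<delta>0 by (simp only: norm_of_real) simp
      also have "\<dots> < \<delta>" using \<delta>0 by (simp add: field_simps add_pos_nonneg)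
      finally show "x \<in> {x. poly (r ()) x = 0}" using zero by simp
    qed
    ultimately show False using fin range_inj_infinite finite_subset by metis
  qed
  moreover have "line 1 = q"
  proof (rule nth_equalityI)
    show "length (line 1) = length q" using q by (simp add: line_def)
    fix i assume "i < length (line 1)"
    then have "i < n" by (simp add: line_def)
    then show "line 1 ! i = q ! i" using linei[of i 1] by simp
  qed
  moreover have "D (line 1) = poly (r ()) 1" unfolding line_def by (rule r[rule_format])
  ultimately show ?thesis by simp
qed

lemma sum_split2: "(\<Sum>i<2 * n. f i) = (\<Sum>i<n. f (2 * i)) + (\<Sum>i<n. f (2 * i + 1 :: nat)) " for f :: "nat \<Rightarrow> complex"
  by (induction n) (simp_all add: algebra_simps)

lemma poly_even:
  fixes \<rho> :: "complex poly"
  assumes "degree \<rho> \<le> B"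
  shows "poly \<rho> s + poly \<rho> (-s) = 2 * (\<Sum>i<Suc B. coeff \<rho> (2*i) * (s^2)^i)"
proof -
  have pe: "poly \<rho> x = (\<Sum>i<Suc B. coeff \<rho> (2*i) * (x^2)^i) + x * (\<Sum>i<Suc B. coeff \<rho> (2*i+1) * (x^2)^i)" for x
  proof -
    have "poly \<rho> x = (\<Sum>i\<le>degree \<rho>. coeff \<rho> i * x ^ i)" by (rule poly_altdef)
    also have "\<dots> = (\<Sum>i<2 * Suc B. coeff \<rho> i * x ^ i)"
      by (rule sum.mono_neutral_left) (use assms in \<open>auto simp: coeff_eq_0\<close>)
    also have "\<dots> = (\<Sum>i<Suc B. coeff \<rho> (2*i) * x ^ (2*i)) + (\<Sum>i<Suc B. coeff \<rho> (2*i+1) * x ^ (2*i+1))"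
      by (rule sum_split2)
    also have "\<dots> = (\<Sum>i<Suc B. coeff \<rho> (2*i) * (x^2)^i) + x * (\<Sum>i<Suc B. coeff \<rho> (2*i+1) * (x^2)^i)"
      by (simp add: sum_distrib_left power_mult_distrib[symmetric] power_mult[symmetric] mult.commute mult.left_commute distrib_left)
    finally show ?thesis .
  qed
  show ?thesis unfolding pe[of s] pe[of "-s"] by simp
qed

lemma pf_diff: "p \<in> poly_fun n \<Longrightarrow> q \<in> poly_fun n \<Longrightarrow> (\<lambda>v. p v - q v) \<in> poly_fun n"
  using poly_fun.pf_add[of p n "\<lambda>v. (-1) * q v"] poly_fun.pf_mult[OF poly_fun.pf_const[of "-1"], of q] by simp

lemma pf_d: "(\<lambda>v. v!0 * v!1 * v!2) \<in> poly_fun (m+3)"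
  by (intro poly_fun.intros) auto

lemma pf_g: "gfun m \<in> poly_fun (m+5)"
proof -
  have "(\<lambda>v. v!0 * v!1 * (v!(m+3))^2 + (v!0 * v!(m+4) - v!1 * v!2)^2) \<in> poly_fun (m+5)"
    by (intro poly_fun.intros pf_pow pf_diff) auto
  then show ?thesis unfolding gfun_def[abs_def] .
qed

lemma frac_add: "(d::complex) \<noteq> 0 \<Longrightarrow> a / d^l1 + b / d^l2 = (a * d^l2 + b * d^l1) / d^(l1+l2)"
  by (simp add: field_simps power_add)
lemma frac_mult: "(d::complex) \<noteq> 0 \<Longrightarrow> (a / d^l1) * (b / d^l2) = (a * b) / d^(l1+l2)"
  by (simp add: field_simps power_add)

definition coefR :: "nat \<Rightarrow> (complex list \<Rightarrow> complex) set" where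
  "coefR m = {f. \<exists>Q l. Q \<in> poly_fun (m+3) \<and> (\<forall>p. p!0*p!1*p!2 \<noteq> 0 \<longrightarrow> f p = Q p / (p!0*p!1*p!2)^l)}"

lemma coefR_const: "(\<lambda>p. c) \<in> coefR m"
  unfolding coefR_def by (rule CollectI, rule exI[of _ "\<lambda>p. c"], rule exI[of _ 0]) (auto intro: poly_fun.intros)

lemma coefR_add: assumes "f \<in> coefR m" "g \<in> coefR m" shows "(\<lambda>p. f p + g p) \<in> coefR m"
proof -
  obtain Q1 l1 Q2 l2 where 1: "Q1 \<in> poly_fun (m+3)" "\<forall>p. p!0*p!1*p!2 \<noteq> 0 \<longrightarrow> f p = Q1 p / (p!0*p!1*p!2)^l1"
    and 2: "Q2 \<in> poly_fun (m+3)" "\<forall>p. p!0*p!1*p!2 \<noteq> 0 \<longrightarrow> g p = Q2 p / (p!0*p!1*p!2)^l2"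
    using assms unfolding coefR_def by blast
  show ?thesis unfolding coefR_def
  proof (rule CollectI, rule exI[of _ "\<lambda>p. Q1 p * (p!0*p!1*p!2)^l2 + Q2 p * (p!0*p!1*p!2)^l1"],
      rule exI[of _ "l1 + l2"], intro conjI allI impI)
    show "(\<lambda>p. Q1 p * (p!0*p!1*p!2)^l2 + Q2 p * (p!0*p!1*p!2)^l1) \<in> poly_fun (m+3)"
      by (intro poly_fun.intros pf_pow 1 2 pf_d)
    fix p :: "complex list" assume "p!0*p!1*p!2 \<noteq> 0"
    then show "f p + g p = (Q1 p * (p!0*p!1*p!2)^l2 + Q2 p * (p!0*p!1*p!2)^l1) / (p!0*p!1*p!2)^(l1+l2)"
      using 1 2 frac_add by simp
  qed
qed

lemma coefR_mult: assumes "f \<in> coefR m" "g \<in> coefR m" shows "(\<lambda>p. f p * g p) \<in> coefR m"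
proof -
  obtain Q1 l1 Q2 l2 where 1: "Q1 \<in> poly_fun (m+3)" "\<forall>p. p!0*p!1*p!2 \<noteq> 0 \<longrightarrow> f p = Q1 p / (p!0*p!1*p!2)^l1"
    and 2: "Q2 \<in> poly_fun (m+3)" "\<forall>p. p!0*p!1*p!2 \<noteq> 0 \<longrightarrow> g p = Q2 p / (p!0*p!1*p!2)^l2"
    using assms unfolding coefR_def by blast
  show ?thesis unfolding coefR_def
  proof (rule CollectI, rule exI[of _ "\<lambda>p. Q1 p * Q2 p"],
      rule exI[of _ "l1 + l2"], intro conjI allI impI)
    show "(\<lambda>p. Q1 p * Q2 p) \<in> poly_fun (m+3)"
      by (intro poly_fun.intros pf_pow 1 2 pf_d)
    fix p :: "complex list" assume "p!0*p!1*p!2 \<noteq> 0"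
    then show "f p * g p = (Q1 p * Q2 p) / (p!0*p!1*p!2)^(l1+l2)"
      using 1 2 frac_mult by simp
  qed
qed

lemma coefR_var: "i < m + 3 \<Longrightarrow> (\<lambda>p. p!i) \<in> coefR m"
  unfolding coefR_def by (rule CollectI, rule exI[of _ "\<lambda>p. p!i"], rule exI[of _ 0]) (auto intro: poly_fun.intros)

lemma coefR_a1: "(\<lambda>p. p!1*p!2/p!0) \<in> coefR m"
  unfolding coefR_def
  by (rule CollectI, rule exI[of _ "\<lambda>p. (p!1*p!2)*(p!1*p!2)"], rule exI[of _ 1]) (auto intro!: poly_fun.intros simp: field_simps)

lemma coefR_a2: "(\<lambda>p. 1/p!0) \<in> coefR m"
  unfolding coefR_def
  by (rule CollectI, rule exI[of _ "\<lambda>p. (p!1*p!2)"], rule exI[of _ 1]) (auto intro!: poly_fun.intros simp: field_simps)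

lemma nth_app2:
  assumes "length p = m + 3" "i < m + 5"
  shows "(p @ [x, y]) ! i = (if i < m + 3 then p ! i else if i = m + 3 then x else y)"
proof -
  have "i < m + 3 \<or> i = m + 3 \<or> i = m + 4" using assms(2) by linarith
  then show ?thesis using assms(1) by (auto simp: nth_append)
qed

lemma app_small: "length p = m + 3 \<Longrightarrow> i < m + 3 \<Longrightarrow> (p @ [x, y]) ! i = p ! i"
  by (simp add: nth_append)

lemma gfun_app: "length p = m + 3 \<Longrightarrow> gfun m (p @ [x, y]) = p!0*p!1*x^2 + (p!0*y - p!1*p!2)^2"
  unfolding gfun_def using nth_app2[of p m "m+3" x y] nth_app2[of p m "m+4" x y] app_small[of p m 0] app_small[of p m 1]
    app_small[of p m 2] by simp

lemma loc_app: "length p = m + 3 \<Longrightarrow> loc_fun m P k (p @ [x, y]) = P (p @ [x, y]) / (p!0*p!1*p!2*gfun m (p @ [x, y]))^k"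
  unfolding loc_fun_def using app_small[of p m 0] app_small[of p m 1] app_small[of p m 2] by simp

lemma key:
  fixes m k :: nat and P :: "complex list \<Rightarrow> complex" and U :: "complex list set"
  assumes P: "P \<in> poly_fun (m + 5)"
    and hyp: "\<forall>p\<in>U. \<forall>\<sigma>. \<exists>\<tau>. \<forall>x y.
           (p!0 * p!1 * p!2 \<noteq> 0 \<and> gfun m (p @ [x, y]) \<noteq> 0 \<and> gfun m (p @ [x, y]) = \<sigma>)
           \<longrightarrow> loc_fun m P k (p @ [x, y]) = \<tau>"
  shows "\<exists>E B. (\<forall>i. E i \<in> coefR m) \<and> (\<forall>p\<in>U. \<forall>x y. length p = m + 3 \<and> p!0 * p!1 * p!2 \<noteq> 0 \<and> gfun m (p @ [x, y]) \<noteq> 0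
           \<longrightarrow> P (p @ [x, y]) = (\<Sum>i<Suc B. E i p * (gfun m (p @ [x, y]))^i))"
proof -
  define \<sigma> where "\<sigma> = (\<lambda>i (p::complex list). if i < m + 3 then [:p!i:] else if i = m + 3 then 0
     else [:p!1*p!2/p!0, 1/p!0:])"
  have sc: "\<forall>i<m+5. \<forall>j. (\<lambda>p. coeff (\<sigma> i p) j) \<in> coefR m"
  proof (intro allI impI)
    fix i j :: nat assume i: "i < m + 5"
    consider "i < m + 3" | "i = m + 3" | "i = m + 4" using i by linarith
    then show "(\<lambda>p. coeff (\<sigma> i p) j) \<in> coefR m"
    proof cases
      case 1 then show ?thesis unfolding \<sigma>_def using coefR_var[OF 1] coefR_const
        by (cases j) (simp_all add: coeff_pCons)
    next
      case 2 then show ?thesis unfolding \<sigma>_def using coefR_const by simp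
    next
      case 3
      have "j = 0 \<or> j = 1 \<or> (\<exists>j'. j = Suc (Suc j'))" by presburger
      then show ?thesis unfolding \<sigma>_def using 3 coefR_const coefR_a1 coefR_a2
        by (auto simp: coeff_pCons)
    qed
  qed
  have sd: "\<forall>i<m+5. \<forall>p. degree (\<sigma> i p) \<le> 1" unfolding \<sigma>_def by simp
  obtain r B where r: "\<forall>p t. P (map (\<lambda>i. poly (\<sigma> i p) t) [0..<m+5]) = poly (r p) t"
    and rc: "\<forall>j. (\<lambda>p. coeff (r p) j) \<in> coefR m" and rd: "\<forall>p. degree (r p) \<le> B"
    using subst_poly[OF P, of "coefR m" \<sigma>, OF _ _ _ sc sd] coefR_const coefR_add coefR_mult by blast
  have mapeq: "map (\<lambda>i. poly (\<sigma> i p) t) [0..<m+5] = p @ [0, (p!1*p!2 + t)/p!0]"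
    if "length p = m + 3" "p!0 \<noteq> 0" for p t
  proof (rule nth_equalityI)
    show "length (map (\<lambda>i. poly (\<sigma> i p) t) [0..<m+5]) = length (p @ [0, (p!1*p!2 + t)/p!0])"
      using that by simp
    fix i assume "i < length (map (\<lambda>i. poly (\<sigma> i p) t) [0..<m+5])"
    then have i: "i < m + 5" by simp
    show "map (\<lambda>i. poly (\<sigma> i p) t) [0..<m+5] ! i = (p @ [0, (p!1*p!2 + t)/p!0]) ! i"
      unfolding nth_app2[OF that(1) i] using i that(2) by (simp add: \<sigma>_def field_simps)
  qed
  have main: "P (p @ [x, y]) = (\<Sum>i<Suc B. coeff (r p) (2*i) * (gfun m (p @ [x, y]))^i)"
    if p: "p \<in> U" "length p = m + 3" "p!0 * p!1 * p!2 \<noteq> 0" "gfun m (p @ [x, y]) \<noteq> 0" for p x y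
  proof -
    define G where "G = gfun m (p @ [x, y])"
    define s where "s = csqrt G"
    have s2: "s^2 = G" unfolding s_def by simp
    have a0: "p!0 \<noteq> 0" using p by simp
    obtain \<tau> where \<tau>: "\<forall>x' y'. (p!0 * p!1 * p!2 \<noteq> 0 \<and> gfun m (p @ [x', y']) \<noteq> 0 \<and> gfun m (p @ [x', y']) = G)
           \<longrightarrow> loc_fun m P k (p @ [x', y']) = \<tau>" using hyp p(1) by blast
    have gY: "gfun m (p @ [0, (p!1*p!2 + t)/p!0]) = t^2" for t
      unfolding gfun_app[OF p(2)] using a0 by (simp add: field_simps)
    have den: "(p!0*p!1*p!2*G)^k \<noteq> 0" using p G_def by simp
    have eq: "P (p @ [0, (p!1*p!2 + t)/p!0]) = P (p @ [x, y])" if t: "t^2 = G" for t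
    proof -
      have G0: "G \<noteq> 0" using p G_def by simp
      have "loc_fun m P k (p @ [0, (p!1*p!2 + t)/p!0]) = \<tau>" using \<tau> gY[of t] t G0 p(3) by metis
      moreover have "loc_fun m P k (p @ [x, y]) = \<tau>" using \<tau> p(3) G0 G_def by metis
      ultimately have "P (p @ [0, (p!1*p!2 + t)/p!0]) / (p!0*p!1*p!2*G)^k = P (p @ [x, y]) / (p!0*p!1*p!2*G)^k"
        unfolding loc_app[OF p(2)] gY t G_def by simp
      then show ?thesis using den by (metis divide_cancel_right)
    qed
    have "poly (r p) s = P (p @ [x, y])" using r mapeq[OF p(2) a0, of s] eq[OF s2] by metis
    moreover have "poly (r p) (-s) = P (p @ [x, y])" using r mapeq[OF p(2) a0, of "-s"] eq[of "-s"] s2 by (metis power2_minus)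
    ultimately have "2 * P (p @ [x, y]) = 2 * (\<Sum>i<Suc B. coeff (r p) (2*i) * (s^2)^i)"
      using poly_even[OF rd[rule_format, of p], of s] by simp
    then have "P (p @ [x, y]) = (\<Sum>i<Suc B. coeff (r p) (2*i) * (s^2)^i)"
      by (metis mult_left_cancel zero_neq_numeral)
    then show ?thesis using s2 G_def by simp
  qed
  show ?thesis
    by (rule exI[of _ "\<lambda>i p. coeff (r p) (2*i)"], rule exI[of _ B]) (use rc main in auto)
qed

theorem lemma10:
  fixes m k :: nat and P :: "complex list \<Rightarrow> complex" and U :: "complex list set"
  assumes "P \<in> poly_fun (m + 5)"
    and "U \<noteq> {}" and "open_Cn (m + 3) U"
    and "\<forall>p\<in>U. \<forall>\<sigma>. \<exists>\<tau>. \<forall>x y.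
           (p!0 * p!1 * p!2 \<noteq> 0 \<and> gfun m (p @ [x, y]) \<noteq> 0 \<and> gfun m (p @ [x, y]) = \<sigma>)
           \<longrightarrow> loc_fun m P k (p @ [x, y]) = \<tau>"
  shows "\<exists>(N::int) (C :: int \<Rightarrow> complex list \<Rightarrow> complex).
           (\<forall>j. \<exists>Q l. Q \<in> poly_fun (m + 3) \<and> (\<forall>p. C j p = Q p / (p!0 * p!1 * p!2) ^ l)) \<and>
           (\<forall>v. length v = m + 5 \<and> v!0 * v!1 * v!2 * gfun m v \<noteq> 0 \<longrightarrow>
              loc_fun m P k v = (\<Sum>j\<in>{-N..N}. C j (take (m + 3) v) * (gfun m v) powi j))"
proof -
  note P = assms(1) and U = assms(2,3)
  obtain E B where E: "\<forall>i. E i \<in> coefR m" and EB: "\<forall>p\<in>U. \<forall>x y. length p = m + 3 \<and> p!0 * p!1 * p!2 \<noteq> 0 \<and> gfun m (p @ [x, y]) \<noteq> 0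
           \<longrightarrow> P (p @ [x, y]) = (\<Sum>i<Suc B. E i p * (gfun m (p @ [x, y]))^i)"
    using key[OF P assms(4)] by blast
  have "\<forall>i. \<exists>Q l. Q \<in> poly_fun (m+3) \<and> (\<forall>p. p!0*p!1*p!2 \<noteq> 0 \<longrightarrow> E i p = Q p / (p!0*p!1*p!2)^l)"
    using E unfolding coefR_def by blast
  then obtain Qf lf where Qf: "\<And>i. Qf i \<in> poly_fun (m+3)"
    and Ql: "\<And>i p. p!0*p!1*p!2 \<noteq> 0 \<Longrightarrow> E i p = Qf i p / (p!0*p!1*p!2)^(lf i)" by metis
  define L where "L = (\<Sum>i<Suc B. lf i)"
  have lfL: "lf i \<le> L" if "i < Suc B" for i unfolding L_def using that by (intro member_le_sum) auto
  define d where "d = (\<lambda>v::complex list. v!0*v!1*v!2)"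
  define D where "D = (\<lambda>v. P v * d v ^ L - (\<Sum>i<Suc B. Qf i v * d v ^ (L - lf i) * gfun m v ^ i))"
  define D' where "D' = (\<lambda>v. D v * (d v * gfun m v))"
  have dpf: "d \<in> poly_fun (m+5)" unfolding d_def by (intro poly_fun.intros) auto
  have Dpf: "D' \<in> poly_fun (m+5)" unfolding D'_def D_def
    by (intro poly_fun.intros pf_diff pf_pow pf_sum ballI P dpf pf_g pf_mono[OF Qf]) auto
  define W where "W = {v. length v = m + 5 \<and> take (m+3) v \<in> U}"
  have Wne: "W \<noteq> {}"
  proof -
    obtain p where p: "p \<in> U" using U by blast
    then have "length p = m + 3" using U unfolding open_Cn_def by blast
    then have "p @ [0, 0] \<in> W" using p unfolding W_def by simp
    then show ?thesis by blast
  qed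
  have Wo: "open_Cn (m+5) W" unfolding open_Cn_def
  proof (intro conjI ballI)
    show "W \<subseteq> {p. length p = m + 5}" unfolding W_def by blast
    fix v assume v: "v \<in> W"
    then have "take (m+3) v \<in> U" unfolding W_def by blast
    then obtain e where e: "e > 0" and eb: "\<forall>q. length q = m+3 \<and> (\<forall>i<m+3. norm (q ! i - take (m+3) v ! i) < e) \<longrightarrow> q \<in> U"
      using U unfolding open_Cn_def by blast
    show "\<exists>e>0. \<forall>q. length q = m + 5 \<and> (\<forall>i<m + 5. cmod (q ! i - v ! i) < e) \<longrightarrow> q \<in> W"
    proof (intro exI[of _ e] conjI allI impI)
      fix q assume q: "length q = m + 5 \<and> (\<forall>i<m + 5. cmod (q ! i - v ! i) < e)"
      have "take (m+3) q \<in> U" using q by (intro eb[rule_format]) auto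
      then show "q \<in> W" using q unfolding W_def by blast
    qed (rule e)
  qed
  have Wz: "\<forall>v\<in>W. D' v = 0"
  proof
    fix v assume v: "v \<in> W"
    define p where "p = take (m+3) v"
    have lv: "length v = m + 5" and pU: "p \<in> U" using v unfolding W_def p_def by auto
    have lp: "length p = m + 3" using lv unfolding p_def by simp
    have vp: "v = p @ [v!(m+3), v!(m+4)]"
    proof (rule nth_equalityI)
      show "length v = length (p @ [v!(m+3), v!(m+4)])" using lv lp by simp
      fix i assume "i < length v"
      then have i: "i < m + 5" using lv by simp
      show "v ! i = (p @ [v!(m+3), v!(m+4)]) ! i"
      proof -
        have "i < m + 3 \<or> i = m + 3 \<or> i = m + 4" using i by linarith
        then show ?thesis unfolding nth_app2[OF lp i] unfolding p_def by auto
      qed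
    qed
    show "D' v = 0"
    proof (cases "d v * gfun m v = 0")
      case True then show ?thesis unfolding D'_def by simp
    next
      case False
      have dp: "d v = p!0*p!1*p!2" unfolding d_def p_def by simp
      have dnz: "d v \<noteq> 0" and gnz: "gfun m v \<noteq> 0" using False by auto
      have Pv: "P v = (\<Sum>i<Suc B. E i p * (gfun m v)^i)"
        using EB[rule_format, OF pU, of "v!(m+3)" "v!(m+4)"] lp dnz gnz dp vp by metis
      have Qv: "Qf i v = Qf i p" for i unfolding p_def using pf_take[OF Qf] by simp
      have "P v * d v ^ L = (\<Sum>i<Suc B. E i p * d v ^ L * (gfun m v)^i)"
        unfolding Pv sum_distrib_right by (simp add: algebra_simps)
      also have "\<dots> = (\<Sum>i<Suc B. Qf i v * d v ^ (L - lf i) * gfun m v ^ i)"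
      proof (rule sum.cong[OF refl])
        fix i assume "i \<in> {..<Suc B}"
        then have "lf i \<le> L" using lfL by simp
        then have "d v ^ L = d v ^ (L - lf i) * d v ^ lf i" by (simp flip: power_add)
        then show "E i p * d v ^ L * gfun m v ^ i = Qf i v * d v ^ (L - lf i) * gfun m v ^ i"
          using Ql[of p i] dnz dp Qv by (simp add: field_simps)
      qed
      finally show ?thesis unfolding D'_def D_def by simp
    qed
  qed
  have Dall: "P v = (\<Sum>i<Suc B. Qf i v * d v ^ (L - lf i) * gfun m v ^ i) / d v ^ L"
    if "length v = m + 5" "d v * gfun m v \<noteq> 0" for v
  proof -
    have "D' v = 0" using pf_zero[OF Dpf Wne Wo Wz that(1)] .
    then have "D v = 0" using that(2) unfolding D'_def by simp
    then show ?thesis using that(2) unfolding D_def by (simp add: field_simps)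
  qed
  define N where "N = int (B + k)"
  define C where "C = (\<lambda>j p. if 0 \<le> j + int k \<and> j + int k \<le> int B then
      Qf (nat (j + int k)) p * d p ^ (L - lf (nat (j + int k))) / d p ^ (L + k) else 0)"
  show ?thesis
  proof (rule exI[of _ N], rule exI[of _ C], intro conjI allI impI)
    fix j
    show "\<exists>Q l. Q \<in> poly_fun (m + 3) \<and> (\<forall>p. C j p = Q p / (p!0 * p!1 * p!2) ^ l)"
    proof (cases "0 \<le> j + int k \<and> j + int k \<le> int B")
      case True
      show ?thesis
        by (rule exI[of _ "\<lambda>p. Qf (nat (j + int k)) p * d p ^ (L - lf (nat (j + int k)))"], rule exI[of _ "L + k"])
          (use True in \<open>auto simp: C_def d_def intro!: poly_fun.intros pf_pow pf_d Qf\<close>)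
    next
      case False
      show ?thesis
        by (rule exI[of _ "\<lambda>p. 0"], rule exI[of _ 0]) (use False in \<open>auto simp: C_def intro: poly_fun.intros\<close>)
    qed
  next
    fix v assume v: "length v = m + 5 \<and> v!0 * v!1 * v!2 * gfun m v \<noteq> 0"
    define G where "G = gfun m v"
    define p where "p = take (m + 3) v"
    have dv: "d p = d v" unfolding d_def p_def by simp
    have Qv: "Qf i p = Qf i v" for i unfolding p_def using pf_take[OF Qf] by simp
    have dnz: "d v \<noteq> 0" and gnz: "G \<noteq> 0" using v unfolding d_def G_def by auto
    have "(\<Sum>j\<in>{-N..N}. C j p * G powi j) = (\<Sum>j\<in>(\<lambda>i. int i - int k) ` {..<Suc B}. C j p * G powi j)"
    proof (rule sum.mono_neutral_right)
      show "(\<lambda>i. int i - int k) ` {..<Suc B} \<subseteq> {-N..N}" unfolding N_def by auto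
      show "\<forall>j\<in>{-N..N} - (\<lambda>i. int i - int k) ` {..<Suc B}. C j p * G powi j = 0"
      proof
        fix j assume j: "j \<in> {-N..N} - (\<lambda>i. int i - int k) ` {..<Suc B}"
        have "\<not> (0 \<le> j + int k \<and> j + int k \<le> int B)"
        proof
          assume h: "0 \<le> j + int k \<and> j + int k \<le> int B"
          then have "j = int (nat (j + int k)) - int k" "nat (j + int k) \<in> {..<Suc B}" by auto
          then show False using j by blast
        qed
        then have "C j p = 0" unfolding C_def by (rule if_not_P)
        then show "C j p * G powi j = 0" by simp
      qed
    qed simp
    also have "\<dots> = (\<Sum>i<Suc B. C (int i - int k) p * G powi (int i - int k))"
      by (subst sum.reindex) (auto simp: inj_on_def)
    also have "\<dots> = (\<Sum>i<Suc B. Qf i v * d v ^ (L - lf i) * G ^ i / d v ^ L / (d v * G) ^ k)"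
    proof (rule sum.cong[OF refl])
      fix i assume "i \<in> {..<Suc B}"
      then have C: "C (int i - int k) p = Qf i v * d v ^ (L - lf i) / d v ^ (L + k)"
        unfolding C_def by (simp add: dv Qv)
      show "C (int i - int k) p * G powi (int i - int k) = Qf i v * d v ^ (L - lf i) * G ^ i / d v ^ L / (d v * G) ^ k"
        unfolding C using gnz dnz by (simp add: power_int_diff power_add power_mult_distrib field_simps)
    qed
    also have "\<dots> = P v / (d v * G) ^ k"
    proof -
      have "P v = (\<Sum>i<Suc B. Qf i v * d v ^ (L - lf i) * gfun m v ^ i) / d v ^ L"
        using Dall[of v] v dnz gnz unfolding G_def by simp
      then show ?thesis unfolding G_def by (simp only: sum_divide_distrib)
    qed
    finally show "loc_fun m P k v = (\<Sum>j\<in>{-N..N}. C j (take (m + 3) v) * gfun m v powi j)"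
      unfolding loc_fun_def G_def p_def d_def by simp
  qed
qed

end
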